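(* Let $X$ be a normed space and $Y$ a Banach space. Let $p$ and $\theta$ be nonnegative integer numbers with $p\neq1,3$. Suppose that an odd mapping $f:X\to Y$ satisfies $$\|D_f(x,y)\|\le\theta\left(\|x\|^p+\|y\|^p\right)$$ for all $x,y\in X$. Then there exist a unique additive function $A:X\to Y$ and a unique cubic function $C:X\to Y$ satisfying $$\|f(x)-A(x)-C(x)\|\le\frac{\theta}{6}\left[\frac{1}{|2^p-2|}+\frac{1}{|2^p-8|}\right]\|x\|^p$$ for all $x\in X$.
   Context: For a mapping $f:X\to Y$ define $$D_f(x,y)=3f(x+3y)-f(3x+y)-12[f(x+y)+f(x-y)]+16[f(x)+f(y)]-12f(2y)+4f(2x)$$ for $x,y\in X$. A function $g:X\to Y$ is additive if $g(x+y)=g(x)+g(y)$ for all $x,y\in X$, and cubic if $g(x+2y)-3g(x+y)+3g(x)-g(x-y)=6g(y)$ for all $x,y\in X$. *)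

theory Defs
  imports "HOL-Analysis.Analysis"
begin

definition Dfun :: "('a::real_vector \<Rightarrow> 'b::real_vector) \<Rightarrow> 'a \<Rightarrow> 'a \<Rightarrow> 'b" where
  "Dfun f x y = 3 *\<^sub>R f (x + 3 *\<^sub>R y) - f (3 *\<^sub>R x + y)
     - 12 *\<^sub>R (f (x + y) + f (x - y)) + 16 *\<^sub>R (f x + f y)
     - 12 *\<^sub>R f (2 *\<^sub>R y) + 4 *\<^sub>R f (2 *\<^sub>R x)"

definition is_additive :: "('a::real_vector \<Rightarrow> 'b::real_vector) \<Rightarrow> bool" where
  "is_additive g \<longleftrightarrow> (\<forall>x y. g (x + y) = g x + g y)"

definition is_cubic :: "('a::real_vector \<Rightarrow> 'b::real_vector) \<Rightarrow> bool" where
  "is_cubic g \<longleftrightarrow> (\<forall>x y. g (x + 2 *\<^sub>R y) - 3 *\<^sub>R g (x + y) + 3 *\<^sub>R g x - g (x - y) = 6 *\<^sub>R g y)"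

end

theory Submission imports Defs begin

definition V :: "nat \<Rightarrow> (nat \<Rightarrow> 'b::real_vector) \<Rightarrow> (nat \<Rightarrow> real) \<Rightarrow> 'b" where
  "V n p c = (\<Sum>i<n. c i *\<^sub>R p i)"

lemma V_add: "V n p c + V n p d = V n p (\<lambda>i. c i + d i)"
  by (simp add: V_def sum.distrib scaleR_add_left)
lemma V_diff: "V n p c - V n p d = V n p (\<lambda>i. c i - d i)"
  by (simp add: V_def sum_subtractf scaleR_diff_left)
lemma V_scale: "k *\<^sub>R V n p c = V n p (\<lambda>i. k * c i)"
  by (simp add: V_def scaleR_sum_right)
lemma V_neg: "- V n p c = V n p (\<lambda>i. - c i)"
  by (simp add: V_def sum_negf)
lemma V_eq: "(\<forall>i<n. c i = d i) \<Longrightarrow> V n p c = V n p d"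
  by (simp add: V_def)
lemma V_unit: "k < n \<Longrightarrow> V n p (\<lambda>i. if i = k then 1 else 0) = p k"
proof -
  assume "k < n"
  have "V n p (\<lambda>i. if i = k then 1 else 0) = (\<Sum>i<n. if i = k then p i else 0)"
    unfolding V_def by (rule sum.cong) auto
  also have "\<dots> = p k" using \<open>k < n\<close> by (simp add: sum.delta')
  finally show ?thesis .
qed

lemma Dexp_gen:
  fixes F :: "'a::real_vector \<Rightarrow> 'b::real_vector"
  assumes "\<Phi> = (\<lambda>a b. F (a *\<^sub>R x + b *\<^sub>R y))"
  shows "Dfun F (a1 *\<^sub>R x + b1 *\<^sub>R y) (a2 *\<^sub>R x + b2 *\<^sub>R y) = 3 *\<^sub>R \<Phi> (a1+3*a2) (b1+3*b2) - \<Phi> (3*a1+a2) (3*b1+b2) - 12 *\<^sub>R (\<Phi> (a1+a2) (b1+b2) + \<Phi> (a1-a2) (b1-b2)) + 16 *\<^sub>R (\<Phi> a1 b1 + \<Phi> a2 b2) - 12 *\<^sub>R \<Phi> (2*a2) (2*b2) + 4 *\<^sub>R \<Phi> (2*a1) (2*b1)"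
proof -
  have e1: "a1 *\<^sub>R x + b1 *\<^sub>R y + 3 *\<^sub>R (a2 *\<^sub>R x + b2 *\<^sub>R y) = (a1+3*a2) *\<^sub>R x + (b1+3*b2) *\<^sub>R y"
    by (simp add: algebra_simps)
  have e2: "3 *\<^sub>R (a1 *\<^sub>R x + b1 *\<^sub>R y) + (a2 *\<^sub>R x + b2 *\<^sub>R y) = (3*a1+a2) *\<^sub>R x + (3*b1+b2) *\<^sub>R y"
    by (simp add: algebra_simps)
  have e3: "a1 *\<^sub>R x + b1 *\<^sub>R y + (a2 *\<^sub>R x + b2 *\<^sub>R y) = (a1+a2) *\<^sub>R x + (b1+b2) *\<^sub>R y"
    by (simp add: algebra_simps)
  have e4: "a1 *\<^sub>R x + b1 *\<^sub>R y - (a2 *\<^sub>R x + b2 *\<^sub>R y) = (a1-a2) *\<^sub>R x + (b1-b2) *\<^sub>R y"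
    by (simp add: algebra_simps)
  have e5: "2 *\<^sub>R (a2 *\<^sub>R x + b2 *\<^sub>R y) = (2*a2) *\<^sub>R x + (2*b2) *\<^sub>R y"
    by (simp add: algebra_simps)
  have e6: "2 *\<^sub>R (a1 *\<^sub>R x + b1 *\<^sub>R y) = (2*a1) *\<^sub>R x + (2*b1) *\<^sub>R y"
    by (simp add: algebra_simps)
  show ?thesis unfolding Dfun_def e1 e2 e3 e4 e5 e6 assms by simp
qed

lemma neg_gen:
  fixes F :: "'a::real_vector \<Rightarrow> 'b::real_vector"
  assumes "\<Phi> = (\<lambda>a b. F (a *\<^sub>R x + b *\<^sub>R y))" and odd: "\<And>z. F (- z) = - F z"
  shows "\<Phi> (-a) (-b) = - \<Phi> a b"
proof -
  have e: "(-a) *\<^sub>R x + (-b) *\<^sub>R y = - (a *\<^sub>R x + b *\<^sub>R y)" by (simp add: algebra_simps)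
  show ?thesis unfolding assms(1) e by (rule odd)
qed

lemma dbl_gen:
  fixes F :: "'a::real_vector \<Rightarrow> 'b::real_vector"
  assumes "\<Phi> = (\<lambda>a b. F (a *\<^sub>R x + b *\<^sub>R y))" and dbl: "\<And>z. F (2 *\<^sub>R z) = q *\<^sub>R F z"
  shows "\<Phi> (2*a) (2*b) = q *\<^sub>R \<Phi> a b"
proof -
  have "(2*a) *\<^sub>R x + (2*b) *\<^sub>R y = 2 *\<^sub>R (a *\<^sub>R x + b *\<^sub>R y)" by (simp add: algebra_simps)
  then show ?thesis using assms by simp
qed

lemma zero_gen:
  fixes F :: "'a::real_vector \<Rightarrow> 'b::real_vector"
  assumes "\<Phi> = (\<lambda>a b. F (a *\<^sub>R x + b *\<^sub>R y))" and odd: "\<And>z. F (- z) = - F z"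
  shows "\<Phi> 0 0 = (0::'b::real_vector)"
proof -
  have "F 0 = - F 0" using odd[of 0] by simp
  then have "F 0 + F 0 = F 0 + - F 0" by (rule arg_cong[where f="\<lambda>t. F 0 + t"])
  then have "2 *\<^sub>R F 0 = 0" by (simp add: scaleR_2)
  then have "F 0 = 0" by simp
  then show ?thesis using assms by simp
qed

lemma cubic_alg:
  fixes F :: "'a::real_vector \<Rightarrow> 'b::real_vector"
  assumes odd: "\<And>z. F (- z) = - F z" and D0: "\<And>u v. Dfun F u v = 0"
    and dbl: "\<And>z. F (2 *\<^sub>R z) = 8 *\<^sub>R F z"
  shows "F (x + 2 *\<^sub>R y) - 3 *\<^sub>R F (x + y) + 3 *\<^sub>R F x - F (x - y) = 6 *\<^sub>R F y"
proof -
  define \<Phi> where "\<Phi> = (\<lambda>a b. F (a *\<^sub>R x + b *\<^sub>R y))"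
  have Dexp: "\<And>a1 b1 a2 b2. Dfun F (a1 *\<^sub>R x + b1 *\<^sub>R y) (a2 *\<^sub>R x + b2 *\<^sub>R y) = 3 *\<^sub>R \<Phi> (a1+3*a2) (b1+3*b2) - \<Phi> (3*a1+a2) (3*b1+b2) - 12 *\<^sub>R (\<Phi> (a1+a2) (b1+b2) + \<Phi> (a1-a2) (b1-b2)) + 16 *\<^sub>R (\<Phi> a1 b1 + \<Phi> a2 b2) - 12 *\<^sub>R \<Phi> (2*a2) (2*b2) + 4 *\<^sub>R \<Phi> (2*a1) (2*b1)"
    by (rule Dexp_gen[OF \<Phi>_def])
  have neg: "\<And>a b. \<Phi> (-a) (-b) = - \<Phi> a b" by (rule neg_gen[OF \<Phi>_def odd])
  have dbl': "\<And>a b. \<Phi> (2*a) (2*b) = 8 *\<^sub>R \<Phi> a b" by (rule dbl_gen[OF \<Phi>_def dbl])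
  have z0: "\<Phi> 0 0 = 0" by (rule zero_gen[OF \<Phi>_def odd])
  define p where "p = (\<lambda>i. [\<Phi> (0) (1), \<Phi> (1) (-2), \<Phi> (1) (-1), \<Phi> (1) (0), \<Phi> (1) (1), \<Phi> (1) (2)] ! i)"
  have u0: "\<Phi> (0) (1) = V 6 p (\<lambda>i. if i = 0 then 1 else 0)" by (simp add: V_unit p_def)
  have u1: "\<Phi> (1) (-2) = V 6 p (\<lambda>i. if i = 1 then 1 else 0)" by (simp add: V_unit p_def)
  have u2: "\<Phi> (1) (-1) = V 6 p (\<lambda>i. if i = 2 then 1 else 0)" by (simp add: V_unit p_def)
  have u3: "\<Phi> (1) (0) = V 6 p (\<lambda>i. if i = 3 then 1 else 0)" by (simp add: V_unit p_def)
  have u4: "\<Phi> (1) (1) = V 6 p (\<lambda>i. if i = 4 then 1 else 0)" by (simp add: V_unit p_def)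
  have u5: "\<Phi> (1) (2) = V 6 p (\<lambda>i. if i = 5 then 1 else 0)" by (simp add: V_unit p_def)
  have key: "\<Phi> 1 2 - 3 *\<^sub>R \<Phi> 1 1 + 3 *\<^sub>R \<Phi> 1 0 - \<Phi> 1 (-1) - 6 *\<^sub>R \<Phi> 0 1 = (-1/64) *\<^sub>R Dfun F ((-1) *\<^sub>R x + (-1) *\<^sub>R y) ((1) *\<^sub>R x + (-1) *\<^sub>R y) + (3/64) *\<^sub>R Dfun F ((-1) *\<^sub>R x + (1) *\<^sub>R y) ((1) *\<^sub>R x + (1) *\<^sub>R y)"
    unfolding Dexp
    apply (simp add: dbl'[of "1" "-2", simplified] dbl'[of "-1" "-2", simplified] neg[of "1" "2", simplified] dbl'[of "0" "-1", simplified] neg[of "0" "1", simplified] dbl'[of "-1" "0", simplified] neg[of "1" "0", simplified] neg[of "1" "1", simplified] dbl'[of "1" "-1", simplified] dbl'[of "-1" "-1", simplified] dbl'[of "1" "2", simplified] dbl'[of "-1" "2", simplified] neg[of "1" "-2", simplified] dbl'[of "0" "1", simplified] neg[of "1" "-1", simplified] dbl'[of "1" "1", simplified] dbl'[of "-1" "1", simplified] z0 u0 u1 u2 u3 u4 u5 V_add V_diff V_scale V_neg del: of_nat_numeral)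
    apply (rule V_eq)
    apply (simp add: less_Suc_eq numeral_eq_Suc)
    done
  have "\<Phi> 1 2 - 3 *\<^sub>R \<Phi> 1 1 + 3 *\<^sub>R \<Phi> 1 0 - \<Phi> 1 (-1) - 6 *\<^sub>R \<Phi> 0 1 = 0" using key by (simp add: D0)
  then show ?thesis by (simp add: \<Phi>_def algebra_simps)
qed

lemma additive_alg:
  fixes F :: "'a::real_vector \<Rightarrow> 'b::real_vector"
  assumes odd: "\<And>z. F (- z) = - F z" and D0: "\<And>u v. Dfun F u v = 0"
    and dbl: "\<And>z. F (2 *\<^sub>R z) = 2 *\<^sub>R F z"
  shows "F (x + y) = F x + F y"
proof -
  define \<Phi> where "\<Phi> = (\<lambda>a b. F (a *\<^sub>R x + b *\<^sub>R y))"
  have Dexp: "\<And>a1 b1 a2 b2. Dfun F (a1 *\<^sub>R x + b1 *\<^sub>R y) (a2 *\<^sub>R x + b2 *\<^sub>R y) = 3 *\<^sub>R \<Phi> (a1+3*a2) (b1+3*b2) - \<Phi> (3*a1+a2) (3*b1+b2) - 12 *\<^sub>R (\<Phi> (a1+a2) (b1+b2) + \<Phi> (a1-a2) (b1-b2)) + 16 *\<^sub>R (\<Phi> a1 b1 + \<Phi> a2 b2) - 12 *\<^sub>R \<Phi> (2*a2) (2*b2) + 4 *\<^sub>R \<Phi> (2*a1) (2*b1)"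
    by (rule Dexp_gen[OF \<Phi>_def])
  have neg: "\<And>a b. \<Phi> (-a) (-b) = - \<Phi> a b" by (rule neg_gen[OF \<Phi>_def odd])
  have dbl': "\<And>a b. \<Phi> (2*a) (2*b) = 2 *\<^sub>R \<Phi> a b" by (rule dbl_gen[OF \<Phi>_def dbl])
  have z0: "\<Phi> 0 0 = 0" by (rule zero_gen[OF \<Phi>_def odd])
  define p where "p = (\<lambda>i. [\<Phi> (0) (1), \<Phi> (1) (-2), \<Phi> (1) (-1), \<Phi> (1) (0), \<Phi> (1) (1), \<Phi> (1) (2), \<Phi> (2) (-1), \<Phi> (2) (1), \<Phi> (2) (3), \<Phi> (3) (-2)] ! i)"
  have u0: "\<Phi> (0) (1) = V 10 p (\<lambda>i. if i = 0 then 1 else 0)" by (simp add: V_unit p_def)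
  have u1: "\<Phi> (1) (-2) = V 10 p (\<lambda>i. if i = 1 then 1 else 0)" by (simp add: V_unit p_def)
  have u2: "\<Phi> (1) (-1) = V 10 p (\<lambda>i. if i = 2 then 1 else 0)" by (simp add: V_unit p_def)
  have u3: "\<Phi> (1) (0) = V 10 p (\<lambda>i. if i = 3 then 1 else 0)" by (simp add: V_unit p_def)
  have u4: "\<Phi> (1) (1) = V 10 p (\<lambda>i. if i = 4 then 1 else 0)" by (simp add: V_unit p_def)
  have u5: "\<Phi> (1) (2) = V 10 p (\<lambda>i. if i = 5 then 1 else 0)" by (simp add: V_unit p_def)
  have u6: "\<Phi> (2) (-1) = V 10 p (\<lambda>i. if i = 6 then 1 else 0)" by (simp add: V_unit p_def)
  have u7: "\<Phi> (2) (1) = V 10 p (\<lambda>i. if i = 7 then 1 else 0)" by (simp add: V_unit p_def)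
  have u8: "\<Phi> (2) (3) = V 10 p (\<lambda>i. if i = 8 then 1 else 0)" by (simp add: V_unit p_def)
  have u9: "\<Phi> (3) (-2) = V 10 p (\<lambda>i. if i = 9 then 1 else 0)" by (simp add: V_unit p_def)
  have key: "\<Phi> 1 1 - \<Phi> 1 0 - \<Phi> 0 1 = (-1/64) *\<^sub>R Dfun F ((-1) *\<^sub>R x + (-1) *\<^sub>R y) ((-1) *\<^sub>R x + (1) *\<^sub>R y) + (-1/64) *\<^sub>R Dfun F ((-1) *\<^sub>R x + (-1) *\<^sub>R y) ((1) *\<^sub>R x + (0) *\<^sub>R y) + (-5/192) *\<^sub>R Dfun F ((-1) *\<^sub>R x + (-1) *\<^sub>R y) ((1) *\<^sub>R x + (-1) *\<^sub>R y) + (-5/192) *\<^sub>R Dfun F ((-1) *\<^sub>R x + (1) *\<^sub>R y) ((-1) *\<^sub>R x + (-1) *\<^sub>R y) + (1/192) *\<^sub>R Dfun F ((-1) *\<^sub>R x + (0) *\<^sub>R y) ((1) *\<^sub>R x + (1) *\<^sub>R y) + (1/64) *\<^sub>R Dfun F ((-1) *\<^sub>R x + (1) *\<^sub>R y) ((1) *\<^sub>R x + (1) *\<^sub>R y) + (1/192) *\<^sub>R Dfun F ((0) *\<^sub>R x + (-1) *\<^sub>R y) ((-1) *\<^sub>R x + (1) *\<^sub>R y) + (1/64) *\<^sub>R Dfun F ((-1) *\<^sub>R x + (1) *\<^sub>R y) ((0) *\<^sub>R x + (-1) *\<^sub>R y)"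
    unfolding Dexp
    apply (simp add: dbl'[of "-2" "1", simplified] neg[of "2" "-1", simplified] dbl'[of "-2" "-1", simplified] neg[of "2" "1", simplified] dbl'[of "-1" "0", simplified] neg[of "1" "0", simplified] dbl'[of "0" "-1", simplified] neg[of "0" "1", simplified] neg[of "1" "1", simplified] neg[of "1" "-1", simplified] dbl'[of "-1" "1", simplified] dbl'[of "-1" "-1", simplified] neg[of "2" "3", simplified] dbl'[of "1" "0", simplified] dbl'[of "1" "-2", simplified] dbl'[of "-1" "-2", simplified] neg[of "1" "2", simplified] dbl'[of "1" "-1", simplified] dbl'[of "0" "1", simplified] dbl'[of "1" "1", simplified] dbl'[of "1" "2", simplified] dbl'[of "-1" "2", simplified] neg[of "1" "-2", simplified] neg[of "3" "-2", simplified] z0 u0 u1 u2 u3 u4 u5 u6 u7 u8 u9 V_add V_diff V_scale V_neg del: of_nat_numeral)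
    apply (rule V_eq)
    apply (simp add: less_Suc_eq numeral_eq_Suc)
    done
  have "\<Phi> 1 1 - \<Phi> 1 0 - \<Phi> 0 1 = 0" using key by (simp add: D0)
  then show ?thesis by (simp add: \<Phi>_def algebra_simps)
qed

lemma stab:
  fixes h :: "'a::real_normed_vector \<Rightarrow> 'b::banach" and t m a \<rho> :: real and p :: nat
  assumes t: "t > 0" and m: "m > 0" and \<rho>: "\<rho> = m * t^p" "\<rho> < 1" and a: "a \<ge> 0"
    and hb: "\<And>x. norm (h x - m *\<^sub>R h (t *\<^sub>R x)) \<le> a * norm x ^ p"
  shows "\<exists>H. (\<forall>x. (\<lambda>n. m^n *\<^sub>R h (t^n *\<^sub>R x)) \<longlonglongrightarrow> H x) \<and> (\<forall>x. norm (h x - H x) \<le> a / (1 - \<rho>) * norm x ^ p)"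
proof -
  define s where "s = (\<lambda>n x. m^n *\<^sub>R h (t^n *\<^sub>R x))"
  have \<rho>0: "\<rho> \<ge> 0" using t m \<rho> by simp
  have conv: "(\<lambda>n. s n x) \<longlonglongrightarrow> h x - (\<Sum>k. s k x - s (Suc k) x) \<and> norm (h x - (h x - (\<Sum>k. s k x - s (Suc k) x))) \<le> a / (1 - \<rho>) * norm x ^ p" for x
  proof -
    define d where "d = (\<lambda>k. s k x - s (Suc k) x)"
    have dk: "norm (d k) \<le> a * norm x ^ p * \<rho>^k" for k
    proof -
      have "d k = m^k *\<^sub>R (h (t^k *\<^sub>R x) - m *\<^sub>R h (t *\<^sub>R (t^k *\<^sub>R x)))"
        by (simp add: d_def s_def algebra_simps)
      then have "norm (d k) = m^k * norm (h (t^k *\<^sub>R x) - m *\<^sub>R h (t *\<^sub>R (t^k *\<^sub>R x)))" using m by simp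
      also have "\<dots> \<le> m^k * (a * norm (t^k *\<^sub>R x) ^ p)" by (rule mult_left_mono[OF hb]) (use m in simp)
      also have "\<dots> = a * norm x ^ p * \<rho>^k" using t
        by (simp add: \<rho>(1) power_mult_distrib flip: power_mult) (simp add: mult.commute)
      finally show ?thesis .
    qed
    have sg: "summable (\<lambda>k. a * norm x ^ p * \<rho>^k)" using \<rho>0 \<rho> by (intro summable_mult summable_geometric) simp
    have sd: "summable d" by (rule summable_comparison_test'[OF sg]) (use dk in auto)
    have snd: "summable (\<lambda>k. norm (d k))" by (rule summable_comparison_test'[OF sg]) (use dk in auto)
    have tel: "(\<Sum>k<n. d k) = h x - s n x" for n
    proof -
      have "(\<Sum>k<n. d k) = s 0 x - s n x" unfolding d_def by (rule sum_lessThan_telescope')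
      then show ?thesis by (simp add: s_def)
    qed
    have lim: "(\<lambda>n. s n x) \<longlonglongrightarrow> h x - suminf d"
    proof -
      have "(\<lambda>n. h x - (\<Sum>k<n. d k)) \<longlonglongrightarrow> h x - suminf d" by (intro tendsto_intros summable_LIMSEQ sd)
      then show ?thesis by (simp add: tel)
    qed
    have "norm (suminf d) \<le> (\<Sum>k. norm (d k))" by (rule summable_norm[OF snd])
    also have "\<dots> \<le> (\<Sum>k. a * norm x ^ p * \<rho>^k)" by (rule suminf_le[OF dk snd sg])
    also have "\<dots> = a * norm x ^ p * (1 / (1 - \<rho>))" using \<rho>0 \<rho> by (simp add: suminf_mult suminf_geometric)
    finally have "norm (suminf d) \<le> a / (1 - \<rho>) * norm x ^ p" by simp
    then show ?thesis using lim by (simp add: d_def)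
  qed
  show ?thesis
    by (rule exI[of _ "\<lambda>x. h x - (\<Sum>k. s k x - s (Suc k) x)"]) (use conv in \<open>simp add: s_def\<close>)
qed

lemma stab_full:
  fixes h :: "'a::real_normed_vector \<Rightarrow> 'b::banach" and t m a \<rho> K :: real and p :: nat
  assumes t: "t > 0" and m: "m > 0" and \<rho>: "\<rho> = m * t^p" "\<rho> < 1" and a: "a \<ge> 0"
    and hb: "\<And>x. norm (h x - m *\<^sub>R h (t *\<^sub>R x)) \<le> a * norm x ^ p"
    and odd: "\<And>x. h (- x) = - h x"
    and Db: "\<And>u v. norm (Dfun h u v) \<le> K * (norm u ^ p + norm v ^ p)"
  shows "\<exists>H. (\<forall>x. norm (h x - H x) \<le> a / (1 - \<rho>) * norm x ^ p) \<and> (\<forall>x. m *\<^sub>R H (t *\<^sub>R x) = H x)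
     \<and> (\<forall>x. H (- x) = - H x) \<and> (\<forall>u v. Dfun H u v = 0)"
proof -
  define s where "s = (\<lambda>n x. m^n *\<^sub>R h (t^n *\<^sub>R x))"
  obtain H where lim: "\<And>x. (\<lambda>n. s n x) \<longlonglongrightarrow> H x" and bd: "\<And>x. norm (h x - H x) \<le> a / (1 - \<rho>) * norm x ^ p"
    using stab[OF t m \<rho> a hb] unfolding s_def by blast
  have \<rho>0: "\<rho> \<ge> 0" using t m \<rho> by simp
  have sc: "m *\<^sub>R H (t *\<^sub>R x) = H x" for x
  proof -
    have "(\<lambda>n. m *\<^sub>R s n (t *\<^sub>R x)) \<longlonglongrightarrow> m *\<^sub>R H (t *\<^sub>R x)" by (intro tendsto_intros lim)
    moreover have "(\<lambda>n. m *\<^sub>R s n (t *\<^sub>R x)) = (\<lambda>n. s (Suc n) x)" by (simp add: s_def mult.commute)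
    moreover have "(\<lambda>n. s (Suc n) x) \<longlonglongrightarrow> H x" by (rule LIMSEQ_Suc[OF lim])
    ultimately show ?thesis using LIMSEQ_unique by metis
  qed
  have od: "H (- x) = - H x" for x
  proof -
    have "(\<lambda>n. - s n x) \<longlonglongrightarrow> - H x" by (intro tendsto_intros lim)
    moreover have "(\<lambda>n. - s n x) = (\<lambda>n. s n (- x))" by (simp add: s_def odd)
    ultimately show ?thesis using LIMSEQ_unique lim by metis
  qed
  have D0: "Dfun H u v = 0" for u v
  proof -
    have l1: "(\<lambda>n. Dfun (s n) u v) \<longlonglongrightarrow> Dfun H u v" unfolding Dfun_def by (intro tendsto_intros lim)
    have l2: "(\<lambda>n. K * (norm u ^ p + norm v ^ p) * \<rho>^n) \<longlonglongrightarrow> K * (norm u ^ p + norm v ^ p) * 0"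
      using \<rho>0 \<rho> by (intro tendsto_intros) simp
    have eq: "Dfun (s n) u v = m^n *\<^sub>R Dfun h (t^n *\<^sub>R u) (t^n *\<^sub>R v)" for n
      by (simp add: Dfun_def s_def algebra_simps)
    have le: "norm (Dfun (s n) u v) \<le> K * (norm u ^ p + norm v ^ p) * \<rho>^n" for n
    proof -
      have "norm (Dfun (s n) u v) = m^n * norm (Dfun h (t^n *\<^sub>R u) (t^n *\<^sub>R v))" using m by (simp add: eq)
      also have "\<dots> \<le> m^n * (K * (norm (t^n *\<^sub>R u) ^ p + norm (t^n *\<^sub>R v) ^ p))" using m by (intro mult_left_mono Db) auto
      also have "\<dots> = K * (norm u ^ p + norm v ^ p) * \<rho>^n" using t
        by (simp add: \<rho>(1) power_mult_distrib algebra_simps flip: power_mult)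
      finally show ?thesis .
    qed
    have "norm (Dfun H u v) \<le> K * (norm u ^ p + norm v ^ p) * 0"
      by (rule tendsto_le[OF _ l2 tendsto_norm[OF l1]]) (use le in auto)
    then show ?thesis by simp
  qed
  show ?thesis using bd sc od D0 by blast
qed
lemma stab2:
  fixes h :: "'a::real_normed_vector \<Rightarrow> 'b::banach" and q \<theta> K :: real and p :: nat
  assumes q: "q > 0" "2^p \<noteq> q" and \<theta>: "\<theta> \<ge> 0"
    and hb: "\<And>x. norm (h (2 *\<^sub>R x) - q *\<^sub>R h x) \<le> \<theta> * norm x ^ p"
    and odd: "\<And>x. h (- x) = - h x"
    and Db: "\<And>u v. norm (Dfun h u v) \<le> K * (norm u ^ p + norm v ^ p)"
  shows "\<exists>H. (\<forall>x. norm (h x - H x) \<le> \<theta> / \<bar>2^p - q\<bar> * norm x ^ p) \<and> (\<forall>x. H (2 *\<^sub>R x) = q *\<^sub>R H x)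
     \<and> (\<forall>x. H (- x) = - H x) \<and> (\<forall>u v. Dfun H u v = 0)"
proof (cases "2^p < q")
  case True
  have hb': "norm (h x - (1/q) *\<^sub>R h (2 *\<^sub>R x)) \<le> \<theta>/q * norm x ^ p" for x
  proof -
    have "h x - (1/q) *\<^sub>R h (2 *\<^sub>R x) = - (1/q) *\<^sub>R (h (2 *\<^sub>R x) - q *\<^sub>R h x)" using q by (simp add: algebra_simps)
    then have "norm (h x - (1/q) *\<^sub>R h (2 *\<^sub>R x)) = (1/q) * norm (h (2 *\<^sub>R x) - q *\<^sub>R h x)" using q by simp
    also have "\<dots> \<le> (1/q) * (\<theta> * norm x ^ p)" using q by (intro mult_left_mono hb) auto
    finally show ?thesis by simp
  qed
  have r1: "(1/q) * 2^p < 1" using True q by (simp add: field_simps)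
  obtain H where H: "\<forall>x. norm (h x - H x) \<le> (\<theta>/q) / (1 - (1/q) * 2^p) * norm x ^ p"
     "\<forall>x. (1/q) *\<^sub>R H (2 *\<^sub>R x) = H x" "\<forall>x. H (- x) = - H x" "\<forall>u v. Dfun H u v = 0"
    using stab_full[where t=2 and m="1/q" and \<rho>="(1/q) * 2^p" and a="\<theta>/q" and h=h and p=p, OF _ _ refl r1 _ hb' odd Db] q \<theta> by auto
  have c: "(\<theta>/q) / (1 - (1/q) * 2^p) = \<theta> / \<bar>2^p - q\<bar>" using True q by (simp add: field_simps)
  have s: "H (2 *\<^sub>R x) = q *\<^sub>R H x" for x
  proof -
    have "q *\<^sub>R ((1/q) *\<^sub>R H (2 *\<^sub>R x)) = q *\<^sub>R H x" using H(2) by simp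
    then show ?thesis using q by simp
  qed
  show ?thesis using H c s by metis
next
  case False
  then have F: "q < 2^p" using q by simp
  have hb': "norm (h x - q *\<^sub>R h ((1/2) *\<^sub>R x)) \<le> \<theta>/2^p * norm x ^ p" for x
  proof -
    have "norm (h (2 *\<^sub>R ((1/2) *\<^sub>R x)) - q *\<^sub>R h ((1/2) *\<^sub>R x)) \<le> \<theta> * norm ((1/2) *\<^sub>R x) ^ p" by (rule hb)
    then show ?thesis by (simp add: power_mult_distrib power_divide)
  qed
  have r1: "q * (1/2)^p < 1" using F q by (simp add: field_simps)
  obtain H where H: "\<forall>x. norm (h x - H x) \<le> (\<theta>/2^p) / (1 - q * (1/2)^p) * norm x ^ p"
     "\<forall>x. q *\<^sub>R H ((1/2) *\<^sub>R x) = H x" "\<forall>x. H (- x) = - H x" "\<forall>u v. Dfun H u v = 0"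
    using stab_full[where t="1/2" and m=q and \<rho>="q * (1/2)^p" and a="\<theta>/2^p" and h=h and p=p, OF _ _ refl r1 _ hb' odd Db] q \<theta> by auto
  have c: "(\<theta>/2^p) / (1 - q * (1/2)^p) = \<theta> / \<bar>2^p - q\<bar>" using F q by (simp add: field_simps)
  have s: "H (2 *\<^sub>R x) = q *\<^sub>R H x" for x
    using H(2)[rule_format, of "2 *\<^sub>R x"] by simp
  show ?thesis using H c s by metis
qed
lemma lim_zero:
  fixes v :: "'b::real_normed_vector"
  assumes lim: "w \<longlonglongrightarrow> v" and b: "\<And>n. norm (w n) \<le> B * r^n" and r: "0 \<le> r" "r < 1"
  shows "v = 0"
proof -
  have l2: "(\<lambda>n. B * r^n) \<longlonglongrightarrow> B * 0" using r by (intro tendsto_intros) simp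
  have "norm v \<le> B * 0"
    by (rule tendsto_le[OF _ l2 tendsto_norm[OF lim]]) (use b in auto)
  then show ?thesis by simp
qed

lemma pow_scale:
  fixes g :: "'a::real_vector \<Rightarrow> 'b::real_vector"
  assumes d: "\<And>z. g (2 *\<^sub>R z) = k *\<^sub>R g z"
  shows "g (2^n *\<^sub>R x) = k^n *\<^sub>R g x"
proof (induction n)
  case 0 then show ?case by simp
next
  case (Suc n)
  have "g (2^Suc n *\<^sub>R x) = g (2 *\<^sub>R (2^n *\<^sub>R x))" by simp
  also have "\<dots> = k *\<^sub>R g (2^n *\<^sub>R x)" by (rule d)
  finally show ?case using Suc by simp
qed

lemma pow_scale_down:
  fixes g :: "'a::real_vector \<Rightarrow> 'b::real_vector"
  assumes d: "\<And>z. g (2 *\<^sub>R z) = k *\<^sub>R g z" and k: "k \<noteq> 0"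
  shows "g ((1/2)^n *\<^sub>R x) = (1/k)^n *\<^sub>R g x"
proof -
  have "g x = g (2^n *\<^sub>R ((1/2)^n *\<^sub>R x))" by (simp add: power_divide)
  also have "\<dots> = k^n *\<^sub>R g ((1/2)^n *\<^sub>R x)" by (rule pow_scale[where g=g and k=k, OF d])
  finally have "(1/k)^n *\<^sub>R g x = (1/k)^n *\<^sub>R (k^n *\<^sub>R g ((1/2)^n *\<^sub>R x))" by simp
  also have "\<dots> = g ((1/2)^n *\<^sub>R x)" using k by (simp add: power_divide)
  finally show ?thesis by simp
qed

lemma add_double:
  assumes "is_additive a" shows "a (2 *\<^sub>R z) = 2 *\<^sub>R a z"
  using assms unfolding is_additive_def by (simp add: scaleR_2)

lemma cub_id:
  fixes a b d e :: "'b::real_vector"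
  shows "d - 8 *\<^sub>R a = (d - 3 *\<^sub>R a - b - 6 *\<^sub>R a) - (1/6) *\<^sub>R ((a + 3 *\<^sub>R b - e - 6 *\<^sub>R a) + (e - 3 *\<^sub>R b - a - 6 *\<^sub>R b))"
proof -
  define P where "P = (\<lambda>i::nat. [a, b, d, e] ! i)"
  have u: "a = V 4 P (\<lambda>i. if i = 0 then 1 else 0)" "b = V 4 P (\<lambda>i. if i = 1 then 1 else 0)"
    "d = V 4 P (\<lambda>i. if i = 2 then 1 else 0)" "e = V 4 P (\<lambda>i. if i = 3 then 1 else 0)"
    by (simp_all add: V_unit P_def)
  show ?thesis
    apply (simp only: u)
    apply (simp add: V_add V_diff V_scale V_neg del: of_nat_numeral)
    apply (rule V_eq)
    apply (simp add: less_Suc_eq numeral_eq_Suc)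
    done
qed

lemma cub_double:
  fixes c :: "'a::real_vector \<Rightarrow> 'b::real_vector"
  assumes "is_cubic c" shows "c (2 *\<^sub>R y) = 8 *\<^sub>R c y"
proof -
  have cub: "\<And>x y. c (x + 2 *\<^sub>R y) - 3 *\<^sub>R c (x + y) + 3 *\<^sub>R c x - c (x - y) = 6 *\<^sub>R c y"
    using assms unfolding is_cubic_def by blast
  have "6 *\<^sub>R c 0 = 0" using cub[of 0 0] by simp
  then have c0: "c 0 = 0" by simp
  have e1: "c (2 *\<^sub>R y) - 3 *\<^sub>R c y - c (-y) - 6 *\<^sub>R c y = 0" using cub[of 0 y] c0 by simp
  have a1: "-y + 2 *\<^sub>R y = y" by (simp add: scaleR_2)
  have a2: "-y - y = -(2 *\<^sub>R y)" by (simp add: scaleR_2)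
  have e2: "c y + 3 *\<^sub>R c (-y) - c (-(2 *\<^sub>R y)) - 6 *\<^sub>R c y = 0" using cub[of "-y" y] c0 unfolding a1 a2 by simp
  have e3: "c (-(2 *\<^sub>R y)) - 3 *\<^sub>R c (-y) - c y - 6 *\<^sub>R c (-y) = 0" using cub[of 0 "-y"] c0 by simp
  have "c (2 *\<^sub>R y) - 8 *\<^sub>R c y = 0"
    by (subst cub_id[where b="c (-y)" and e="c (-(2 *\<^sub>R y))"]) (simp only: e1 e2 e3, simp)
  then show ?thesis by simp
qed

lemma uniq0:
  fixes a c :: "'a::real_normed_vector \<Rightarrow> 'b::real_normed_vector"
  assumes ad: "is_additive a" and cu: "is_cubic c" and p: "p \<noteq> 1" "p \<noteq> 3"
    and bd: "\<And>x. norm (a x + c x) \<le> M * norm x ^ p"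
  shows "a x = 0 \<and> c x = 0"
proof -
  have a2: "\<And>z. a (2 *\<^sub>R z) = 2 *\<^sub>R a z" by (rule add_double[OF ad])
  have c2: "\<And>z. c (2 *\<^sub>R z) = 8 *\<^sub>R c z" by (rule cub_double[OF cu])
  have au: "\<And>n z. a (2^n *\<^sub>R z) = 2^n *\<^sub>R a z" by (rule pow_scale[where g=a and k=2, OF a2])
  have cup: "\<And>n z. c (2^n *\<^sub>R z) = 8^n *\<^sub>R c z" by (rule pow_scale[where g=c and k=8, OF c2])
  have adn: "\<And>n z. a ((1/2)^n *\<^sub>R z) = (1/2)^n *\<^sub>R a z" using pow_scale_down[where g=a and k=2, OF a2] by simp
  have cdn: "\<And>n z. c ((1/2)^n *\<^sub>R z) = (1/8)^n *\<^sub>R c z" using pow_scale_down[where g=c and k=8, OF c2] by simp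
  have upb: "norm ((1/k)^n *\<^sub>R (a (2^n *\<^sub>R x) + c (2^n *\<^sub>R x))) \<le> M * norm x ^ p * (2^p/k)^n" if k: "k > 0" for k n
  proof -
    have "norm ((1/k)^n *\<^sub>R (a (2^n *\<^sub>R x) + c (2^n *\<^sub>R x))) = (1/k)^n * norm (a (2^n *\<^sub>R x) + c (2^n *\<^sub>R x))"
      using k by simp
    also have "\<dots> \<le> (1/k)^n * (M * norm (2^n *\<^sub>R x) ^ p)" using k by (intro mult_left_mono bd) auto
    also have "\<dots> = M * norm x ^ p * (2^p/k)^n"
      by (simp add: power_mult_distrib power_divide algebra_simps flip: power_mult)
    finally show ?thesis .
  qed
  have dnb: "norm (k^n *\<^sub>R (a ((1/2)^n *\<^sub>R x) + c ((1/2)^n *\<^sub>R x))) \<le> M * norm x ^ p * (k/2^p)^n" if k: "k > 0" for k n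
  proof -
    have "norm (k^n *\<^sub>R (a ((1/2)^n *\<^sub>R x) + c ((1/2)^n *\<^sub>R x))) = k^n * norm (a ((1/2)^n *\<^sub>R x) + c ((1/2)^n *\<^sub>R x))"
      using k by simp
    also have "\<dots> \<le> k^n * (M * norm ((1/2)^n *\<^sub>R x) ^ p)" using k by (intro mult_left_mono bd) auto
    also have "\<dots> = M * norm x ^ p * (k/2^p)^n"
      by (simp add: power_mult_distrib power_divide algebra_simps flip: power_mult)
    finally show ?thesis .
  qed
  have A1: "a x = 0" if "p \<ge> 2"
  proof (rule lim_zero)
    show "(\<lambda>n. 2^n *\<^sub>R (a ((1/2)^n *\<^sub>R x) + c ((1/2)^n *\<^sub>R x))) \<longlonglongrightarrow> a x"
    proof -
      have "(\<lambda>n. a x + (1/4)^n *\<^sub>R c x) \<longlonglongrightarrow> a x + 0 *\<^sub>R c x" by (intro tendsto_intros) simp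
      moreover have "(\<lambda>n. a x + (1/4)^n *\<^sub>R c x) = (\<lambda>n. 2^n *\<^sub>R (a ((1/2)^n *\<^sub>R x) + c ((1/2)^n *\<^sub>R x)))"
        by (simp add: adn cdn scaleR_add_right flip: power_mult_distrib)
      ultimately show ?thesis by simp
    qed
    show "norm (2^n *\<^sub>R (a ((1/2)^n *\<^sub>R x) + c ((1/2)^n *\<^sub>R x))) \<le> M * norm x ^ p * (2/2^p)^n" for n
      using dnb[of 2 n] by simp
    show "0 \<le> (2::real)/2^p" by simp
    have "(2::real)^2 \<le> 2^p" using that by (intro power_increasing) auto
    then show "(2::real)/2^p < 1" by simp
  qed
  have C1: "c x = 0" if "p \<le> 2"
  proof (rule lim_zero)
    show "(\<lambda>n. (1/8)^n *\<^sub>R (a (2^n *\<^sub>R x) + c (2^n *\<^sub>R x))) \<longlonglongrightarrow> c x"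
    proof -
      have "(\<lambda>n. (1/4)^n *\<^sub>R a x + c x) \<longlonglongrightarrow> 0 *\<^sub>R a x + c x" by (intro tendsto_intros) simp
      moreover have "(\<lambda>n. (1/4)^n *\<^sub>R a x + c x) = (\<lambda>n. (1/8)^n *\<^sub>R (a (2^n *\<^sub>R x) + c (2^n *\<^sub>R x)))"
        by (simp add: au cup scaleR_add_right flip: power_mult_distrib)
      ultimately show ?thesis by simp
    qed
    show "norm ((1/8)^n *\<^sub>R (a (2^n *\<^sub>R x) + c (2^n *\<^sub>R x))) \<le> M * norm x ^ p * (2^p/8)^n" for n
      using upb[of 8 n] by simp
    show "0 \<le> (2::real)^p/8" by simp
    have "(2::real)^p \<le> 2^2" using that by (intro power_increasing) auto
    then show "(2::real)^p/8 < 1" by simp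
  qed
  have A2: "a x = 0" if "p = 0" "c x = 0"
  proof (rule lim_zero)
    have "(\<lambda>n. (1/2)^n *\<^sub>R (a (2^n *\<^sub>R x) + c (2^n *\<^sub>R x))) = (\<lambda>n. a x)"
      using that by (simp add: au cup scaleR_add_right flip: power_mult_distrib)
    then show "(\<lambda>n. (1/2)^n *\<^sub>R (a (2^n *\<^sub>R x) + c (2^n *\<^sub>R x))) \<longlonglongrightarrow> a x" by simp
    show "norm ((1/2)^n *\<^sub>R (a (2^n *\<^sub>R x) + c (2^n *\<^sub>R x))) \<le> M * norm x ^ p * (1/2)^n" for n
      using upb[of 2 n] that by simp
  qed simp_all
  have C2: "c x = 0" if "p \<ge> 4" "a x = 0"
  proof (rule lim_zero)
    have "(\<lambda>n. 8^n *\<^sub>R (a ((1/2)^n *\<^sub>R x) + c ((1/2)^n *\<^sub>R x))) = (\<lambda>n. c x)"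
      using that by (simp add: adn cdn scaleR_add_right flip: power_mult_distrib)
    then show "(\<lambda>n. 8^n *\<^sub>R (a ((1/2)^n *\<^sub>R x) + c ((1/2)^n *\<^sub>R x))) \<longlonglongrightarrow> c x" by simp
    show "norm (8^n *\<^sub>R (a ((1/2)^n *\<^sub>R x) + c ((1/2)^n *\<^sub>R x))) \<le> M * norm x ^ p * (8/2^p)^n" for n
      using dnb[of 8 n] by simp
    show "0 \<le> (8::real)/2^p" by simp
    have "(2::real)^4 \<le> 2^p" using that by (intro power_increasing) auto
    then show "(8::real)/2^p < 1" by simp
  qed
  show ?thesis
  proof (cases "p = 0")
    case True then show ?thesis using A2 C1 by simp
  next
    case False
    then have "p = 2 \<or> p \<ge> 4" using p by arith
    then show ?thesis using A1 C1 C2 by auto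
  qed
qed
lemma id_h2:
  fixes A B C :: "'b::real_vector"
  shows "A - 2 *\<^sub>R B - 8 *\<^sub>R (B - 2 *\<^sub>R C) = A - 10 *\<^sub>R B + 16 *\<^sub>R C"
proof -
  define P where "P = (\<lambda>i::nat. [A, B, C] ! i)"
  have u: "A = V 3 P (\<lambda>i. if i = 0 then 1 else 0)" "B = V 3 P (\<lambda>i. if i = 1 then 1 else 0)"
    "C = V 3 P (\<lambda>i. if i = 2 then 1 else 0)"
    by (simp_all add: V_unit P_def)
  show ?thesis
    apply (simp only: u)
    apply (simp add: V_add V_diff V_scale V_neg del: of_nat_numeral)
    apply (rule V_eq)
    apply (simp add: less_Suc_eq numeral_eq_Suc)
    done
qed

lemma id_h8:
  fixes A B C :: "'b::real_vector"
  shows "A - 8 *\<^sub>R B - 2 *\<^sub>R (B - 8 *\<^sub>R C) = A - 10 *\<^sub>R B + 16 *\<^sub>R C"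
proof -
  define P where "P = (\<lambda>i::nat. [A, B, C] ! i)"
  have u: "A = V 3 P (\<lambda>i. if i = 0 then 1 else 0)" "B = V 3 P (\<lambda>i. if i = 1 then 1 else 0)"
    "C = V 3 P (\<lambda>i. if i = 2 then 1 else 0)"
    by (simp_all add: V_unit P_def)
  show ?thesis
    apply (simp only: u)
    apply (simp add: V_add V_diff V_scale V_neg del: of_nat_numeral)
    apply (rule V_eq)
    apply (simp add: less_Suc_eq numeral_eq_Suc)
    done
qed

lemma id_D:
  fixes A B C :: "'b::real_vector"
  shows "3 *\<^sub>R A - A - 12 *\<^sub>R (B + 0) + 16 *\<^sub>R (C + C) - 12 *\<^sub>R B + 4 *\<^sub>R B = 2 *\<^sub>R (A - 10 *\<^sub>R B + 16 *\<^sub>R C)"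
proof -
  define P where "P = (\<lambda>i::nat. [A, B, C] ! i)"
  have u: "A = V 3 P (\<lambda>i. if i = 0 then 1 else 0)" "B = V 3 P (\<lambda>i. if i = 1 then 1 else 0)"
    "C = V 3 P (\<lambda>i. if i = 2 then 1 else 0)"
    by (simp_all add: V_unit P_def)
  show ?thesis
    apply (simp only: u add_0_right)
    apply (simp add: V_add V_diff V_scale V_neg del: of_nat_numeral)
    apply (rule V_eq)
    apply (simp add: less_Suc_eq numeral_eq_Suc)
    done
qed

lemma id_fin:
  fixes f1 f2 G H :: "'b::real_vector"
  shows "f1 - - (1/6) *\<^sub>R G - (1/6) *\<^sub>R H = (1/6) *\<^sub>R ((f2 - 2 *\<^sub>R f1 - H) - (f2 - 8 *\<^sub>R f1 - G))"
proof -
  define P where "P = (\<lambda>i::nat. [f1, f2, G, H] ! i)"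
  have u: "f1 = V 4 P (\<lambda>i. if i = 0 then 1 else 0)" "f2 = V 4 P (\<lambda>i. if i = 1 then 1 else 0)"
    "G = V 4 P (\<lambda>i. if i = 2 then 1 else 0)" "H = V 4 P (\<lambda>i. if i = 3 then 1 else 0)"
    by (simp_all add: V_unit P_def)
  show ?thesis
    apply (simp only: u)
    apply (simp add: V_add V_diff V_scale V_neg del: of_nat_numeral)
    apply (rule V_eq)
    apply (simp add: less_Suc_eq numeral_eq_Suc)
    done
qed

lemma Db_comb:
  fixes f :: "'a::real_normed_vector \<Rightarrow> 'b::real_normed_vector" and \<theta> k :: real
  assumes ineq: "\<And>x y. norm (Dfun f x y) \<le> \<theta> * (norm x ^ p + norm y ^ p)" and k: "k \<ge> 0"
  shows "norm (Dfun (\<lambda>x. f (2 *\<^sub>R x) - k *\<^sub>R f x) u v) \<le> (\<theta> * (2^p + k)) * (norm u ^ p + norm v ^ p)"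
proof -
  have "Dfun (\<lambda>x. f (2 *\<^sub>R x) - k *\<^sub>R f x) u v = Dfun f (2 *\<^sub>R u) (2 *\<^sub>R v) - k *\<^sub>R Dfun f u v"
    by (simp add: Dfun_def algebra_simps)
  then have "norm (Dfun (\<lambda>x. f (2 *\<^sub>R x) - k *\<^sub>R f x) u v) \<le> norm (Dfun f (2 *\<^sub>R u) (2 *\<^sub>R v)) + k * norm (Dfun f u v)"
    using k norm_triangle_ineq4[of "Dfun f (2 *\<^sub>R u) (2 *\<^sub>R v)" "k *\<^sub>R Dfun f u v"] by simp
  also have "\<dots> \<le> \<theta> * (norm (2 *\<^sub>R u) ^ p + norm (2 *\<^sub>R v) ^ p) + k * (\<theta> * (norm u ^ p + norm v ^ p))"
    using k by (intro add_mono mult_left_mono ineq) auto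
  also have "\<dots> = (\<theta> * (2^p + k)) * (norm u ^ p + norm v ^ p)"
    by (simp add: power_mult_distrib algebra_simps)
  finally show ?thesis .
qed

theorem corollary3p4:
  fixes f :: "'a::real_normed_vector \<Rightarrow> 'b::banach"
    and p :: nat and \<theta> :: nat
  assumes "p \<noteq> 1" and "p \<noteq> 3"
    and odd: "\<And>x. f (- x) = - f x"
    and ineq: "\<And>x y. norm (Dfun f x y) \<le> real \<theta> * (norm x ^ p + norm y ^ p)"
  shows "\<exists>A C. is_additive A \<and> is_cubic C \<and>
           (\<forall>x. norm (f x - A x - C x) \<le> real \<theta> / 6 *
              (1 / \<bar>2 ^ p - 2\<bar> + 1 / \<bar>2 ^ p - 8\<bar>) * norm x ^ p) \<and>
           (\<forall>A' C'. is_additive A' \<and> is_cubic C' \<and>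
              (\<forall>x. norm (f x - A' x - C' x) \<le> real \<theta> / 6 *
                 (1 / \<bar>2 ^ p - 2\<bar> + 1 / \<bar>2 ^ p - 8\<bar>) * norm x ^ p)
              \<longrightarrow> A' = A \<and> C' = C)"
proof -
  have f0: "f 0 = 0"
  proof -
    have "f 0 = - f 0" using odd[of 0] by simp
    then have "f 0 + f 0 = f 0 + - f 0" by (rule arg_cong[where f="\<lambda>t. f 0 + t"])
    then have "2 *\<^sub>R f 0 = 0" by (simp add: scaleR_2)
    then show "f 0 = 0" by simp
  qed
  have key: "norm (f (2 *\<^sub>R (2 *\<^sub>R x)) - 10 *\<^sub>R f (2 *\<^sub>R x) + 16 *\<^sub>R f x) \<le> real \<theta> * norm x ^ p" for x
  proof -
    have a1: "x + 3 *\<^sub>R x = 2 *\<^sub>R (2 *\<^sub>R x)"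
    proof -
      have "x + 3 *\<^sub>R x = (1 + 3) *\<^sub>R x" by (simp only: scaleR_add_left scaleR_one)
      then show ?thesis by simp
    qed
    have a2: "3 *\<^sub>R x + x = 2 *\<^sub>R (2 *\<^sub>R x)" using a1 by (simp add: add.commute)
    have a3: "x + x = 2 *\<^sub>R x" by (simp add: scaleR_2)
    have "Dfun f x x = 2 *\<^sub>R (f (2 *\<^sub>R (2 *\<^sub>R x)) - 10 *\<^sub>R f (2 *\<^sub>R x) + 16 *\<^sub>R f x)"
      unfolding Dfun_def a1 a2 a3 diff_self f0 by (rule id_D)
    then have "2 * norm (f (2 *\<^sub>R (2 *\<^sub>R x)) - 10 *\<^sub>R f (2 *\<^sub>R x) + 16 *\<^sub>R f x) = norm (Dfun f x x)" by simp
    also have "\<dots> \<le> real \<theta> * (norm x ^ p + norm x ^ p)" by (rule ineq)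
    finally show ?thesis by simp
  qed
  define h where "h = (\<lambda>x. f (2 *\<^sub>R x) - 2 *\<^sub>R f x)"
  define g where "g = (\<lambda>x. f (2 *\<^sub>R x) - 8 *\<^sub>R f x)"
  have hbh: "norm (h (2 *\<^sub>R x) - 8 *\<^sub>R h x) \<le> real \<theta> * norm x ^ p" for x
  proof -
    have e: "h (2 *\<^sub>R x) - 8 *\<^sub>R h x = f (2 *\<^sub>R (2 *\<^sub>R x)) - 10 *\<^sub>R f (2 *\<^sub>R x) + 16 *\<^sub>R f x"
      unfolding h_def by (rule id_h2)
    show ?thesis unfolding e by (rule key)
  qed
  have hbg: "norm (g (2 *\<^sub>R x) - 2 *\<^sub>R g x) \<le> real \<theta> * norm x ^ p" for x
  proof -
    have e: "g (2 *\<^sub>R x) - 2 *\<^sub>R g x = f (2 *\<^sub>R (2 *\<^sub>R x)) - 10 *\<^sub>R f (2 *\<^sub>R x) + 16 *\<^sub>R f x"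
      unfolding g_def by (rule id_h8)
    show ?thesis unfolding e by (rule key)
  qed
  have oh: "h (- x) = - h x" for x by (simp add: h_def odd)
  have og: "g (- x) = - g x" for x by (simp add: g_def odd)
  have Dh: "norm (Dfun h u v) \<le> (real \<theta> * (2^p + 2)) * (norm u ^ p + norm v ^ p)" for u v
    unfolding h_def by (rule Db_comb[OF ineq]) simp
  have Dg: "norm (Dfun g u v) \<le> (real \<theta> * (2^p + 8)) * (norm u ^ p + norm v ^ p)" for u v
    unfolding g_def by (rule Db_comb[OF ineq]) simp
  have p8: "(2::real)^p \<noteq> 8"
  proof
    assume "(2::real)^p = 8"
    then have "(2::real)^p = 2^3" by simp
    then have "p = 3" using power_inject_exp[of "2::real" p 3] by (simp only: one_less_numeral_iff semiring_norm(76) simp_thms)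
    with assms(2) show False by simp
  qed
  have p2: "(2::real)^p \<noteq> 2"
  proof
    assume "(2::real)^p = 2"
    then have "(2::real)^p = 2^1" by simp
    then have "p = 1" using power_inject_exp[of "2::real" p 1] by (simp only: one_less_numeral_iff semiring_norm(76) simp_thms)
    with assms(1) show False by simp
  qed
  obtain Hc where Hc: "\<forall>x. norm (h x - Hc x) \<le> real \<theta> / \<bar>2^p - 8\<bar> * norm x ^ p" "\<forall>x. Hc (2 *\<^sub>R x) = 8 *\<^sub>R Hc x"
     "\<forall>x. Hc (- x) = - Hc x" "\<forall>u v. Dfun Hc u v = 0"
    using stab2[where q=8 and \<theta>="real \<theta>" and h=h and p=p, OF _ p8 _ hbh oh Dh] by auto
  obtain Ga where Ga: "\<forall>x. norm (g x - Ga x) \<le> real \<theta> / \<bar>2^p - 2\<bar> * norm x ^ p" "\<forall>x. Ga (2 *\<^sub>R x) = 2 *\<^sub>R Ga x"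
     "\<forall>x. Ga (- x) = - Ga x" "\<forall>u v. Dfun Ga u v = 0"
    using stab2[where q=2 and \<theta>="real \<theta>" and h=g and p=p, OF _ p2 _ hbg og Dg] by auto
  have Gadd: "Ga (x + y) = Ga x + Ga y" for x y
    by (rule additive_alg) (use Ga in auto)
  have Hcub: "Hc (x + 2 *\<^sub>R y) - 3 *\<^sub>R Hc (x + y) + 3 *\<^sub>R Hc x - Hc (x - y) = 6 *\<^sub>R Hc y" for x y
    by (rule cubic_alg) (use Hc in auto)
  define A where "A = (\<lambda>x. - (1/6) *\<^sub>R Ga x)"
  define C where "C = (\<lambda>x. (1/6) *\<^sub>R Hc x)"
  define B where "B = real \<theta> / 6 * (1 / \<bar>2 ^ p - 2\<bar> + 1 / \<bar>2 ^ p - 8\<bar>)"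
  have addA: "is_additive A" unfolding is_additive_def A_def by (simp add: Gadd algebra_simps)
  have cubC: "is_cubic C" unfolding is_cubic_def C_def
  proof (intro allI)
    fix x y
    have "(1/6) *\<^sub>R (Hc (x + 2 *\<^sub>R y) - 3 *\<^sub>R Hc (x + y) + 3 *\<^sub>R Hc x - Hc (x - y)) = (1/6) *\<^sub>R (6 *\<^sub>R Hc y)"
      by (simp only: Hcub)
    then show "(1/6) *\<^sub>R Hc (x + 2 *\<^sub>R y) - 3 *\<^sub>R ((1/6) *\<^sub>R Hc (x + y)) + 3 *\<^sub>R ((1/6) *\<^sub>R Hc x) - (1/6) *\<^sub>R Hc (x - y) = 6 *\<^sub>R ((1/6) *\<^sub>R Hc y)"
      by (simp add: algebra_simps)
  qed
  have bnd: "norm (f x - A x - C x) \<le> B * norm x ^ p" for x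
  proof -
    have "f x - A x - C x = (1/6) *\<^sub>R ((h x - Hc x) - (g x - Ga x))"
      unfolding A_def C_def h_def g_def by (rule id_fin)
    then have "norm (f x - A x - C x) \<le> (1/6) * (norm (h x - Hc x) + norm (g x - Ga x))"
      by (simp add: norm_triangle_ineq4)
    also have "\<dots> \<le> (1/6) * (real \<theta> / \<bar>2^p - 8\<bar> * norm x ^ p + real \<theta> / \<bar>2^p - 2\<bar> * norm x ^ p)"
      using Hc(1) Ga(1) by (intro mult_left_mono add_mono) auto
    also have "\<dots> = B * norm x ^ p" by (simp add: B_def algebra_simps)
    finally show ?thesis .
  qed
  have uniq: "A' = A \<and> C' = C" if ad': "is_additive A'" and cu': "is_cubic C'"
    and b': "\<forall>x. norm (f x - A' x - C' x) \<le> B * norm x ^ p" for A' C'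
  proof -
    define a where "a = (\<lambda>x. A x - A' x)"
    define c where "c = (\<lambda>x. C x - C' x)"
    have "is_additive a" using addA ad' unfolding is_additive_def a_def by (simp add: algebra_simps)
    moreover have "is_cubic c" unfolding is_cubic_def
    proof (intro allI)
      fix x y
      have e1: "C (x + 2 *\<^sub>R y) - 3 *\<^sub>R C (x + y) + 3 *\<^sub>R C x - C (x - y) = 6 *\<^sub>R C y" using cubC unfolding is_cubic_def by blast
      have e2: "C' (x + 2 *\<^sub>R y) - 3 *\<^sub>R C' (x + y) + 3 *\<^sub>R C' x - C' (x - y) = 6 *\<^sub>R C' y" using cu' unfolding is_cubic_def by blast
      have "c (x + 2 *\<^sub>R y) - 3 *\<^sub>R c (x + y) + 3 *\<^sub>R c x - c (x - y)
          = (C (x + 2 *\<^sub>R y) - 3 *\<^sub>R C (x + y) + 3 *\<^sub>R C x - C (x - y)) - (C' (x + 2 *\<^sub>R y) - 3 *\<^sub>R C' (x + y) + 3 *\<^sub>R C' x - C' (x - y))"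
        by (simp add: c_def algebra_simps)
      also have "\<dots> = 6 *\<^sub>R c y" unfolding e1 e2 by (simp add: c_def algebra_simps)
      finally show "c (x + 2 *\<^sub>R y) - 3 *\<^sub>R c (x + y) + 3 *\<^sub>R c x - c (x - y) = 6 *\<^sub>R c y" .
    qed
    moreover have "norm (a x + c x) \<le> (2 * B) * norm x ^ p" for x
    proof -
      have "a x + c x = (f x - A' x - C' x) - (f x - A x - C x)" by (simp add: a_def c_def algebra_simps)
      then have "norm (a x + c x) \<le> norm (f x - A' x - C' x) + norm (f x - A x - C x)"
        using norm_triangle_ineq4[of "f x - A' x - C' x" "f x - A x - C x"] by simp
      also have "\<dots> \<le> B * norm x ^ p + B * norm x ^ p" using b' bnd by (intro add_mono) auto
      finally show ?thesis by simp
    qed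
    ultimately have z: "a x = 0 \<and> c x = 0" for x using uniq0 assms(1,2) by blast
    show ?thesis
    proof
      show "A' = A" proof fix x show "A' x = A x" using z[of x] by (simp add: a_def) qed
      show "C' = C" proof fix x show "C' x = C x" using z[of x] by (simp add: c_def) qed
    qed
  qed
  show ?thesis unfolding B_def[symmetric] using addA cubC bnd uniq by blast
qed

end
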